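(* Let $(\sigma_i)_{i\in\mathbb{N}}$ be i.i.d. copies of $\sigma_0$, where $L(u):=1/\mathbf{P}(\sigma_0>u)$ is slowly varying. For $x>0$ let $i_x:=\min\{i:\sigma_i>x\}$ and $i_x^-:=\mathrm{argmax}\{\sigma_i:i<i_x\}$. Then, as $x\to\infty$, each of the four families \[ \frac{i_x}{L(x)},\qquad \frac{L(\sigma_{i_x})}{L(x)}-1,\qquad \frac{L(\sigma_{i_x^-})}{L(x)},\qquad 1-\frac{L(\sigma_{i_x^-})}{L(x)} \] is bounded above and bounded below in probability.
   Context: $\sigma_0$ is a strictly positive random variable under $\mathbf{P}$ and $L(u):=1/\mathbf{P}(\sigma_0>u)$ satisfies $\lim_{u\to\infty}L(uv)/L(u)=1$ for all $v>0$. A family $(Y_x)$ of non-negative random variables is bounded above in probability if $(Y_x)$ is tight (for large $x$), and bounded below in probability if $(1/Y_x)$ is tight. *)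

theory Defs
  imports "HOL-Probability.Probability"
begin

definition tailL :: "'a measure \<Rightarrow> ('a \<Rightarrow> real) \<Rightarrow> real \<Rightarrow> real" where
  "tailL M X u = 1 / measure M {\<omega> \<in> space M. u < X \<omega>}"

definition slowly_varying :: "(real \<Rightarrow> real) \<Rightarrow> bool" where
  "slowly_varying L \<longleftrightarrow> (\<forall>v>0. ((\<lambda>u. L (u * v) / L u) \<longlongrightarrow> 1) at_top)"

definition first_exceed :: "(nat \<Rightarrow> 'a \<Rightarrow> real) \<Rightarrow> real \<Rightarrow> 'a \<Rightarrow> nat" where
  "first_exceed \<sigma> x \<omega> = (LEAST i. x < \<sigma> i \<omega>)"

definition prev_argmax :: "(nat \<Rightarrow> 'a \<Rightarrow> real) \<Rightarrow> real \<Rightarrow> 'a \<Rightarrow> nat" where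
  "prev_argmax \<sigma> x \<omega> = (ARG_MAX (\<lambda>i. \<sigma> i \<omega>) i. i < first_exceed \<sigma> x \<omega>)"

definition bdd_above_in_prob :: "'a measure \<Rightarrow> (real \<Rightarrow> 'a \<Rightarrow> real) \<Rightarrow> bool" where
  "bdd_above_in_prob M Y \<longleftrightarrow>
     (\<forall>\<epsilon>>0. \<exists>K. \<forall>\<^sub>F x in at_top. measure M {\<omega> \<in> space M. K < Y x \<omega>} < \<epsilon>)"

text \<open>Family (Y_x) bounded below in probability: (1/Y_x) tight for large x, where
  1/Y > K (K > 0) means Y < 1/K (with 1/0 = infinity).\<close>
definition bdd_below_in_prob :: "'a measure \<Rightarrow> (real \<Rightarrow> 'a \<Rightarrow> real) \<Rightarrow> bool" where
  "bdd_below_in_prob M Y \<longleftrightarrow>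
     (\<forall>\<epsilon>>0. \<exists>\<delta>>0. \<forall>\<^sub>F x in at_top. measure M {\<omega> \<in> space M. Y x \<omega> < \<delta>} < \<epsilon>)"

end

theory Submission
  imports Defs
begin


lemma nat_ceil_ge: "0 \<le> (a::real) \<Longrightarrow> a \<le> real (nat \<lceil>a\<rceil>)"
  by linarith
lemma nat_ceil_lt: "0 \<le> (a::real) \<Longrightarrow> real (nat \<lceil>a\<rceil>) < a + 1"
  by linarith
lemma lt_nat_ceil: "real m < (a::real) \<Longrightarrow> m < nat \<lceil>a\<rceil>"
  by linarith
lemma ge_nat_ceil: "(a::real) < real m \<Longrightarrow> nat \<lceil>a\<rceil> \<le> m"
  by linarith
lemma exp_bd: "0 < (e::real) \<Longrightarrow> 1/e \<le> K \<Longrightarrow> exp (-K) < e"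
proof -
  assume e: "0 < e" and K: "1/e \<le> K"
  have "1 + K \<le> exp K" by (rule exp_ge_add_one_self)
  then have "1/e < exp K" using K by linarith
  then have "1 < e * exp K" using e by (simp add: field_simps)
  then show ?thesis using e by (simp add: exp_minus field_simps)
qed
lemma ar4: fixes a b d :: real shows "0<a \<Longrightarrow> 0<d \<Longrightarrow> a/(1+d)/(1+d) < b \<Longrightarrow> (a - b)/a < 4*d"
proof -
  assume a: "0<a" and d: "0<d" and h: "a/(1+d)/(1+d) < b"
  have s: "(1-2*d)*((1+d)*(1+d)) \<le> 1" using d by (simp add: algebra_simps power2_eq_square)
  have q: "0 < (1+d)*(1+d)" using d by simp
  have "a*((1-2*d)*((1+d)*(1+d))) \<le> a*1" using mult_left_mono[OF s less_imp_le[OF a]] .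
  then have "a*(1-2*d)*((1+d)*(1+d)) \<le> a" by (simp add: mult.assoc)
  then have "a*(1-2*d) \<le> a/((1+d)*(1+d))" using q by (simp add: pos_le_divide_eq)
  then have "a*(1-2*d) \<le> a/(1+d)/(1+d)" by simp
  then have "a - b < a*(2*d)" using h by (simp add: algebra_simps)
  then have "a - b < a*(4*d)" using a d by (smt (verit) mult_strict_left_mono)
  then show ?thesis using a by (simp add: field_simps)
qed
lemma ar8: fixes a b d :: real shows "0<a \<Longrightarrow> 0<b \<Longrightarrow> 0<d \<Longrightarrow> d<1 \<Longrightarrow> b < (1+d)*(a/(1-d)) \<Longrightarrow> (b - a)/b < 2*d"
proof -
  assume a: "0<a" and b: "0<b" and d: "0<d" "d<1" and h: "b < (1+d)*(a/(1-d))"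
  have "b*(1-d) < (1+d)*a" using h d by (simp add: field_simps)
  have "b*(1-2*d)*(1+d) \<le> b*(1-d)" using b d by (simp add: algebra_simps)
  then have "b*(1-2*d) < a" using \<open>b*(1-d) < (1+d)*a\<close> d
    by (smt (verit, ccfv_SIG) mult_less_cancel_left_pos mult.commute)
  then show ?thesis using b by (simp add: field_simps)
qed
lemma ar3: fixes a s e :: real shows "0<a \<Longrightarrow> 0<e \<Longrightarrow> s < 2*(a/(4/e+1)) \<Longrightarrow> s/a < e"
proof -
  assume a: "0<a" and e: "0<e" and h: "s < 2*(a/(4/e+1))"
  have "2*(a/(4/e+1)) = 2*a*e/(4+e)" using e by (simp add: field_simps)
  also have "\<dots> \<le> a*e" using a e by (simp add: field_simps)
  finally have "s < a*e" using h by simp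
  then show ?thesis using a by (simp add: field_simps)
qed
lemma ar6: fixes a r d :: real shows "0<a \<Longrightarrow> 0<d \<Longrightarrow> (a/d)/2 < r \<Longrightarrow> a/r < 2*d"
proof -
  assume a: "0<a" and d: "0<d" and h: "(a/d)/2 < r"
  have r: "0 < r" using h a d by (smt (verit) divide_pos_pos)
  have "a < 2*d*r" using h d by (simp add: field_simps)
  then show ?thesis using r by (simp add: field_simps)
qed
lemma aux3: fixes a b K :: real shows "0<a \<Longrightarrow> 0<b \<Longrightarrow> 0 \<le> K \<Longrightarrow> K + 1 < a/b \<Longrightarrow> b < a/(K+1)"
  by (simp add: field_simps)
lemma aux4: fixes a b d :: real shows "0<a \<Longrightarrow> 0<b \<Longrightarrow> d < 1 \<Longrightarrow> 1 - d < a/b \<Longrightarrow> b < a/(1-d)"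
  by (simp add: field_simps)

locale LS = prob_space M for M :: "'a measure" +
  fixes \<sigma> :: "nat \<Rightarrow> 'a \<Rightarrow> real"
  assumes indep: "indep_vars (\<lambda>_. borel) \<sigma> UNIV"
    and ident: "\<And>i. distr M borel (\<sigma> i) = distr M borel (\<sigma> 0)"
    and sv: "slowly_varying (tailL M (\<sigma> 0))"
begin

definition p :: "real \<Rightarrow> real" where "p x = prob {\<omega>\<in>space M. x < \<sigma> 0 \<omega>}"
definition P0 :: "real set \<Rightarrow> real" where "P0 A = prob (\<sigma> 0 -` A \<inter> space M)"

lemma meas[measurable]: "\<sigma> i \<in> borel_measurable M"
  using indep unfolding indep_vars_def2 by auto

lemma dist: "A \<in> sets borel \<Longrightarrow> prob (\<sigma> i -` A \<inter> space M) = P0 A"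
proof -
  assume A: "A \<in> sets borel"
  have "prob (\<sigma> i -` A \<inter> space M) = measure (distr M borel (\<sigma> i)) A"
    using A by (simp add: measure_distr)
  also have "\<dots> = measure (distr M borel (\<sigma> 0)) A" by (simp add: ident[of i])
  also have "\<dots> = P0 A" using A by (simp add: measure_distr P0_def)
  finally show ?thesis .
qed

lemma prodf:
  assumes A: "A \<in> sets borel" and B: "B \<in> sets borel"
  shows "prob {\<omega>\<in>space M. (\<forall>j<i. \<sigma> j \<omega> \<in> A) \<and> \<sigma> i \<omega> \<in> B} = P0 A ^ i * P0 B"
proof -
  define C where "C j = (if j = i then B else A)" for j
  have "{\<omega>\<in>space M. (\<forall>j<i. \<sigma> j \<omega> \<in> A) \<and> \<sigma> i \<omega> \<in> B} = (\<Inter>j\<in>{..i}. \<sigma> j -` C j \<inter> space M)"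
    by (auto simp: C_def) (metis atMost_iff less_imp_le_nat less_irrefl)
  also have "prob \<dots> = (\<Prod>j\<in>{..i}. prob (\<sigma> j -` C j \<inter> space M))"
    by (rule indep_varsD[OF indep]) (auto simp: C_def A B)
  also have "\<dots> = (\<Prod>j\<in>{..i}. P0 (C j))"
    by (rule prod.cong) (auto simp: C_def A B dist)
  also have "\<dots> = (\<Prod>j<i. P0 (C j)) * P0 (C i)"
    by (simp add: lessThan_Suc_atMost[symmetric])
  also have "(\<Prod>j<i. P0 (C j)) = (\<Prod>j<i. P0 A)"
    by (rule prod.cong) (auto simp: C_def)
  finally show ?thesis by (simp add: C_def)
qed

lemma P0_nonneg: "0 \<le> P0 A" by (simp add: P0_def)

lemma unionb:
  assumes A: "A \<in> sets borel" and B: "B \<in> sets borel" and lt: "P0 A < 1"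
  shows "prob {\<omega>\<in>space M. \<exists>i. (\<forall>j<i. \<sigma> j \<omega> \<in> A) \<and> \<sigma> i \<omega> \<in> B} \<le> P0 B / (1 - P0 A)"
proof -
  define E where "E i = {\<omega>\<in>space M. (\<forall>j<i. \<sigma> j \<omega> \<in> A) \<and> \<sigma> i \<omega> \<in> B}" for i
  have eq: "{\<omega>\<in>space M. \<exists>i. (\<forall>j<i. \<sigma> j \<omega> \<in> A) \<and> \<sigma> i \<omega> \<in> B} = (\<Union>i. E i)"
    by (auto simp: E_def)
  have Ep: "prob (E i) = P0 B * P0 A ^ i" for i using prodf[OF A B] by (simp add: E_def mult.commute)
  have g: "(\<lambda>i. P0 A ^ i) sums (1 / (1 - P0 A))"
    using geometric_sums[of "P0 A"] lt P0_nonneg[of A] by simp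
  have s: "(\<lambda>i. prob (E i)) sums (P0 B * (1 / (1 - P0 A)))"
    unfolding Ep by (rule sums_mult[OF g])
  have "range E \<subseteq> sets M"
  proof
    fix X assume "X \<in> range E"
    then obtain i where X: "X = E i" by auto
    have "E i = (\<Inter>j\<in>{..i}. \<sigma> j -` (if j = i then B else A) \<inter> space M)"
      by (auto simp: E_def) (metis atMost_iff less_imp_le_nat less_irrefl)
    also have "\<dots> \<in> sets M"
      using A B by (intro sets.finite_INT) (auto intro!: measurable_sets[OF meas])
    finally show "X \<in> sets M" using X by simp
  qed
  then have "prob (\<Union>i. E i) \<le> (\<Sum>i. prob (E i))"
    using s by (intro finite_measure_subadditive_countably) (auto simp: sums_iff)
  then show ?thesis using s eq by (simp add: sums_iff)
qed

lemma p_P0: "P0 {x<..} = p x"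
  unfolding P0_def p_def by (rule arg_cong[where f=prob]) auto

lemma P0_UNIV: "P0 UNIV = 1"
  unfolding P0_def by (simp add: prob_space)

lemma p_nonneg: "0 \<le> p x" by (simp add: p_def)

lemma ev_p[measurable]: "{\<omega>\<in>space M. x < \<sigma> 0 \<omega>} \<in> events" by measurable

lemma P0_atMost: "P0 {..r} = 1 - p r"
proof -
  have "\<sigma> 0 -` {..r} \<inter> space M = space M - {\<omega>\<in>space M. r < \<sigma> 0 \<omega>}" by auto
  then show ?thesis unfolding P0_def p_def by (simp add: prob_compl)
qed

lemma p_mono: "s \<le> t \<Longrightarrow> p t \<le> p s"
  unfolding p_def by (rule finite_measure_mono) auto

lemma p_le1: "p x \<le> 1" unfolding p_def by simp

lemma P0_int: "s \<le> t \<Longrightarrow> P0 {s<..t} = p s - p t"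
proof -
  assume st: "s \<le> t"
  have "\<sigma> 0 -` {s<..t} \<inter> space M = {\<omega>\<in>space M. s < \<sigma> 0 \<omega>} - {\<omega>\<in>space M. t < \<sigma> 0 \<omega>}" by auto
  then show ?thesis unfolding P0_def p_def using st
    by (simp add: finite_measure_Diff) (subst finite_measure_Diff, auto)
qed

lemma L_eq: "tailL M (\<sigma> 0) u = 1 / p u" unfolding tailL_def p_def ..

lemma p_lim: "(p \<longlongrightarrow> 0) at_top"
proof -
  interpret D: real_distribution "distr M borel (\<sigma> 0)" by simp
  have "cdf (distr M borel (\<sigma> 0)) x = 1 - p x" for x
    by (simp add: cdf_def measure_distr P0_atMost[unfolded P0_def])
  then have "cdf (distr M borel (\<sigma> 0)) = (\<lambda>x. 1 - p x)" by (rule ext)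
  then have "((\<lambda>x. 1 - p x) \<longlongrightarrow> 1) at_top" using D.cdf_lim_at_top_prob by simp
  then have "((\<lambda>x. 1 - (1 - p x)) \<longlongrightarrow> 1 - 1) at_top" by (intro tendsto_intros)
  then show ?thesis by simp
qed

lemma p_pos: "0 < p u"
proof (rule ccontr)
  assume "\<not> 0 < p u"
  then have pu: "p u = 0" using p_nonneg[of u] by simp
  have ev: "eventually (\<lambda>w. tailL M (\<sigma> 0) (w * 2) / tailL M (\<sigma> 0) w = 0) at_top"
    using eventually_ge_at_top[of "max u 0"]
  proof eventually_elim
    case (elim w)
    then have "p w \<le> p u" by (intro p_mono) auto
    then have "p w = 0" using pu p_nonneg[of w] by simp
    then show ?case by (simp add: L_eq)
  qed
  have tend: "((\<lambda>w. tailL M (\<sigma> 0) (w * 2) / tailL M (\<sigma> 0) w) \<longlongrightarrow> 1) at_top"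
    using sv unfolding slowly_varying_def by auto
  have "((\<lambda>w::real. 0::real) \<longlongrightarrow> 1) at_top"
    by (rule Lim_transform_eventually[OF tend]) (rule ev)
  then show False by (simp add: tendsto_const_iff)
qed

lemma aux1: fixes a b e :: real shows "0<a \<Longrightarrow> 0<b \<Longrightarrow> 0<e \<Longrightarrow> 1/e < a/b \<Longrightarrow> b < e*a"
  by (simp add: field_simps)
lemma aux2: fixes a b e :: real shows "0<a \<Longrightarrow> 0<b \<Longrightarrow> 0<e \<Longrightarrow> a/b < e \<Longrightarrow> a/e < b"
  by (simp add: field_simps)

lemma L_ratio: "tailL M (\<sigma> 0) a / tailL M (\<sigma> 0) b = p b / p a"
  using p_pos[of a] p_pos[of b] by (simp add: L_eq)

lemma sv_half:
  assumes "0 < \<eta>" shows "\<exists>U. \<forall>u\<ge>U. p (u / 2) < (1 + \<eta>) * p u"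
proof -
  have h: "\<forall>v>0. ((\<lambda>u. tailL M (\<sigma> 0) (u * v) / tailL M (\<sigma> 0) u) \<longlongrightarrow> 1) at_top"
    using sv unfolding slowly_varying_def .
  have "((\<lambda>w. tailL M (\<sigma> 0) (w * (1/2)) / tailL M (\<sigma> 0) w) \<longlongrightarrow> 1) at_top"
    using h[rule_format, of "1/2"] by simp
  then have "((\<lambda>w. p w / p (w / 2)) \<longlongrightarrow> 1) at_top"
    unfolding L_ratio by simp
  then have "eventually (\<lambda>w. 1 / (1 + \<eta>) < p w / p (w / 2)) at_top"
    using assms by (intro order_tendstoD(1)) auto
  then obtain U where U: "\<And>u. u \<ge> U \<Longrightarrow> 1 / (1 + \<eta>) < p u / p (u / 2)"
    unfolding eventually_at_top_linorder by blast
  show ?thesis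
    using U aux1 p_pos assms by (metis add_pos_pos zero_less_one)
qed

lemma sv_double:
  assumes "0 < \<eta>" shows "\<exists>U. \<forall>u\<ge>U. p u / (1 + \<eta>) < p (2 * u)"
proof -
  have "((\<lambda>w. tailL M (\<sigma> 0) (w * 2) / tailL M (\<sigma> 0) w) \<longlongrightarrow> 1) at_top"
    using sv unfolding slowly_varying_def by auto
  then have "((\<lambda>w. p w / p (w * 2)) \<longlongrightarrow> 1) at_top"
    unfolding L_ratio by simp
  then have "eventually (\<lambda>w. p w / p (w * 2) < 1 + \<eta>) at_top"
    using assms by (intro order_tendstoD(2)) auto
  then obtain U where U: "\<And>u. u \<ge> U \<Longrightarrow> p u / p (u * 2) < 1 + \<eta>"
    unfolding eventually_at_top_linorder by blast
  show ?thesis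
    using U aux2 p_pos assms by (metis add_pos_pos zero_less_one mult.commute)
qed

lemma null: "prob {\<omega>\<in>space M. \<forall>i. \<sigma> i \<omega> \<le> x} = 0"
proof -
  have le: "prob {\<omega>\<in>space M. \<forall>i. \<sigma> i \<omega> \<le> x} \<le> (1 - p x) ^ n" for n
  proof -
    have "prob {\<omega>\<in>space M. \<forall>i. \<sigma> i \<omega> \<le> x} \<le> prob {\<omega>\<in>space M. (\<forall>j<n. \<sigma> j \<omega> \<in> {..x}) \<and> \<sigma> n \<omega> \<in> UNIV}"
      by (rule finite_measure_mono) auto
    also have "\<dots> = P0 {..x} ^ n * P0 UNIV" by (rule prodf) auto
    also have "\<dots> = (1 - p x) ^ n" by (simp add: P0_atMost P0_UNIV)
    finally show ?thesis .
  qed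
  have "(\<lambda>n. (1 - p x) ^ n) \<longlonglongrightarrow> 0"
    using p_pos[of x] p_le1[of x] by (intro LIMSEQ_power_zero) auto
  then have "prob {\<omega>\<in>space M. \<forall>i. \<sigma> i \<omega> \<le> x} \<le> 0"
    using le by (intro tendsto_le[OF trivial_limit_sequentially _ tendsto_const]) auto
  then show ?thesis using measure_nonneg[of M] by (meson antisym)
qed

end


context LS begin

lemma fe_lt: "j < first_exceed \<sigma> x \<omega> \<Longrightarrow> \<sigma> j \<omega> \<le> x"
  unfolding first_exceed_def using not_less_Least[of j "\<lambda>i. x < \<sigma> i \<omega>"] by simp

lemma fe_ex: "\<exists>i. x < \<sigma> i \<omega> \<Longrightarrow> x < \<sigma> (first_exceed \<sigma> x \<omega>) \<omega>"
  unfolding first_exceed_def by (rule LeastI_ex)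

lemma pa:
  assumes "0 < first_exceed \<sigma> x \<omega>"
  shows "prev_argmax \<sigma> x \<omega> < first_exceed \<sigma> x \<omega> \<and>
    (\<forall>j<first_exceed \<sigma> x \<omega>. \<sigma> j \<omega> \<le> \<sigma> (prev_argmax \<sigma> x \<omega>) \<omega>)"
proof -
  define n where "n = first_exceed \<sigma> x \<omega>"
  have fin: "finite ((\<lambda>i. \<sigma> i \<omega>) ` {..<n})" by simp
  have ne: "(\<lambda>i. \<sigma> i \<omega>) ` {..<n} \<noteq> {}" using assms by (auto simp: n_def)
  obtain k where k: "k < n" "\<sigma> k \<omega> = Max ((\<lambda>i. \<sigma> i \<omega>) ` {..<n})"
    using Max_in[OF fin ne] by auto
  have km: "\<forall>j<n. \<sigma> j \<omega> \<le> \<sigma> k \<omega>" using k Max_ge[OF fin] by auto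
  have "arg_max (\<lambda>i. \<sigma> i \<omega>) (\<lambda>i. i < n) < n \<and>
     (\<forall>j<n. \<sigma> j \<omega> \<le> \<sigma> (arg_max (\<lambda>i. \<sigma> i \<omega>) (\<lambda>i. i < n)) \<omega>)"
    by (rule arg_maxI[where P="\<lambda>i. i < n" and x=k and f="\<lambda>i. \<sigma> i \<omega>"
          and Q="\<lambda>m. m < n \<and> (\<forall>j<n. \<sigma> j \<omega> \<le> \<sigma> m \<omega>)"])
       (use k km in \<open>auto simp: not_less\<close>)
  then show ?thesis unfolding prev_argmax_def n_def by simp
qed

lemma E_meas:
  assumes A: "A \<in> sets borel" and B: "B \<in> sets borel"
  shows "{\<omega>\<in>space M. \<exists>i. (\<forall>j<i. \<sigma> j \<omega> \<in> A) \<and> \<sigma> i \<omega> \<in> B} \<in> events"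
proof -
  define E where "E i = {\<omega>\<in>space M. (\<forall>j<i. \<sigma> j \<omega> \<in> A) \<and> \<sigma> i \<omega> \<in> B}" for i
  have eq: "{\<omega>\<in>space M. \<exists>i. (\<forall>j<i. \<sigma> j \<omega> \<in> A) \<and> \<sigma> i \<omega> \<in> B} = (\<Union>i. E i)"
    by (auto simp: E_def)
  have "E i \<in> events" for i
  proof -
    have "E i = (\<Inter>j\<in>{..i}. \<sigma> j -` (if j = i then B else A) \<inter> space M)"
      by (auto simp: E_def) (metis atMost_iff less_imp_le_nat less_irrefl)
    also have "\<dots> \<in> sets M"
      using A B by (intro sets.finite_INT) (auto intro!: measurable_sets[OF meas])
    finally show ?thesis .
  qed
  then show ?thesis unfolding eq by auto
qed

lemma N_meas: "{\<omega>\<in>space M. \<forall>i. \<sigma> i \<omega> \<le> x} \<in> events"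
proof -
  have "{\<omega>\<in>space M. \<forall>i. \<sigma> i \<omega> \<le> x} = space M \<inter> (\<Inter>i. \<sigma> i -` {..x} \<inter> space M)" by auto
  also have "\<dots> \<in> events" by (intro sets.Int sets.countable_INT') (auto intro!: measurable_sets[OF meas])
  finally show ?thesis .
qed

end


context LS begin

lemma c1: "bdd_above_in_prob M (\<lambda>x \<omega>. real (first_exceed \<sigma> x \<omega>) / tailL M (\<sigma> 0) x)"
  unfolding bdd_above_in_prob_def
proof (intro allI impI)
  fix \<epsilon> :: real assume e: "0 < \<epsilon>"
  define K where "K = max 1 (1/\<epsilon>)"
  have K0: "0 < K" by (simp add: K_def)
  have Ke: "exp (-K) < \<epsilon>" using exp_bd[OF e] by (simp add: K_def)
  show "\<exists>K. \<forall>\<^sub>F x in at_top. prob {\<omega> \<in> space M. K < real (first_exceed \<sigma> x \<omega>) / tailL M (\<sigma> 0) x} < \<epsilon>"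
  proof (intro exI eventuallyI)
    fix x
    have px: "0 < p x" "p x \<le> 1" using p_pos p_le1 by auto
    define n where "n = nat \<lceil>K / p x\<rceil>"
    have "K / p x \<le> real n" unfolding n_def using K0 px by (intro nat_ceil_ge) simp
    then have nK: "K \<le> real n * p x" using px by (simp add: field_simps)
    have sub: "{\<omega> \<in> space M. K < real (first_exceed \<sigma> x \<omega>) / tailL M (\<sigma> 0) x}
        \<subseteq> {\<omega>\<in>space M. (\<forall>j<n. \<sigma> j \<omega> \<in> {..x}) \<and> \<sigma> n \<omega> \<in> UNIV}"
    proof (rule subsetI)
      fix \<omega> assume "\<omega> \<in> {\<omega> \<in> space M. K < real (first_exceed \<sigma> x \<omega>) / tailL M (\<sigma> 0) x}"
      then have \<omega>: "\<omega> \<in> space M" "K < real (first_exceed \<sigma> x \<omega>) * p x" by (auto simp: L_eq)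
      then have "K / p x < real (first_exceed \<sigma> x \<omega>)" using px by (simp add: field_simps)
      then have "n \<le> first_exceed \<sigma> x \<omega>" unfolding n_def by (rule ge_nat_ceil)
      then show "\<omega> \<in> {\<omega>\<in>space M. (\<forall>j<n. \<sigma> j \<omega> \<in> {..x}) \<and> \<sigma> n \<omega> \<in> UNIV}"
        using \<omega> fe_lt by auto
    qed
    have "prob {\<omega> \<in> space M. K < real (first_exceed \<sigma> x \<omega>) / tailL M (\<sigma> 0) x}
        \<le> prob {\<omega>\<in>space M. (\<forall>j<n. \<sigma> j \<omega> \<in> {..x}) \<and> \<sigma> n \<omega> \<in> UNIV}"
      by (rule finite_measure_mono[OF sub]) measurable
    also have "\<dots> = P0 {..x} ^ n * P0 UNIV" by (rule prodf) auto
    also have "\<dots> = (1 - p x) ^ n" by (simp add: P0_atMost P0_UNIV)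
    also have "\<dots> \<le> exp (- p x) ^ n"
      using exp_ge_add_one_self[of "- p x"] px by (intro power_mono) auto
    also have "\<dots> = exp (real n * (- p x))" by (rule exp_of_nat_mult[symmetric])
    also have "\<dots> \<le> exp (-K)" using nK by simp
    finally show "prob {\<omega> \<in> space M. K < real (first_exceed \<sigma> x \<omega>) / tailL M (\<sigma> 0) x} < \<epsilon>"
      using Ke by linarith
  qed
qed

lemma c2: "bdd_below_in_prob M (\<lambda>x \<omega>. real (first_exceed \<sigma> x \<omega>) / tailL M (\<sigma> 0) x)"
  unfolding bdd_below_in_prob_def
proof (intro allI impI)
  fix \<epsilon> :: real assume e: "0 < \<epsilon>"
  have ev: "eventually (\<lambda>x. p x < \<epsilon>/2) at_top" using p_lim e by (intro order_tendstoD(2)) auto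
  show "\<exists>\<delta>>0. \<forall>\<^sub>F x in at_top. prob {\<omega> \<in> space M. real (first_exceed \<sigma> x \<omega>) / tailL M (\<sigma> 0) x < \<delta>} < \<epsilon>"
  proof (intro exI conjI)
    show "0 < \<epsilon>/4" using e by simp
    show "\<forall>\<^sub>F x in at_top. prob {\<omega> \<in> space M. real (first_exceed \<sigma> x \<omega>) / tailL M (\<sigma> 0) x < \<epsilon>/4} < \<epsilon>"
      using ev
    proof eventually_elim
      case (elim x)
      have px: "0 < p x" using p_pos by auto
      define n where "n = nat \<lceil>(\<epsilon>/4) / p x\<rceil>"
      define N where "N = {\<omega>\<in>space M. \<forall>i. \<sigma> i \<omega> \<le> x}"
      define F where "F = (\<Union>i\<in>{..<n}. \<sigma> i -` {x<..} \<inter> space M)"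
      have sub: "{\<omega> \<in> space M. real (first_exceed \<sigma> x \<omega>) / tailL M (\<sigma> 0) x < \<epsilon>/4} \<subseteq> N \<union> F"
      proof (rule subsetI)
        fix \<omega> assume "\<omega> \<in> {\<omega> \<in> space M. real (first_exceed \<sigma> x \<omega>) / tailL M (\<sigma> 0) x < \<epsilon>/4}"
        then have \<omega>: "\<omega> \<in> space M" "real (first_exceed \<sigma> x \<omega>) * p x < \<epsilon>/4" by (auto simp: L_eq)
        show "\<omega> \<in> N \<union> F"
        proof (cases "\<omega> \<in> N")
          case False
          then have "\<exists>i. x < \<sigma> i \<omega>" using \<omega> by (auto simp: N_def not_le)
          then have xs: "x < \<sigma> (first_exceed \<sigma> x \<omega>) \<omega>" by (rule fe_ex)
          have "real (first_exceed \<sigma> x \<omega>) < (\<epsilon>/4) / p x" using \<omega> px by (simp add: field_simps)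
          then have "first_exceed \<sigma> x \<omega> < n" unfolding n_def by (rule lt_nat_ceil)
          then show ?thesis using xs \<omega> by (auto simp: F_def)
        qed simp
      qed
      have NF: "N \<in> events" "F \<in> events" unfolding N_def F_def using N_meas by auto
      have "prob {\<omega> \<in> space M. real (first_exceed \<sigma> x \<omega>) / tailL M (\<sigma> 0) x < \<epsilon>/4} \<le> prob (N \<union> F)"
        using NF by (intro finite_measure_mono[OF sub]) auto
      also have "\<dots> \<le> prob N + prob F" using NF by (rule measure_Un_le)
      also have "prob N = 0" unfolding N_def by (rule null)
      also have "prob F \<le> (\<Sum>i\<in>{..<n}. prob (\<sigma> i -` {x<..} \<inter> space M))"
        unfolding F_def by (rule finite_measure_subadditive_finite) auto
      also have "\<dots> = real n * p x" by (simp add: dist p_P0)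
      also have "\<dots> \<le> (\<epsilon>/4 / p x + 1) * p x"
        using nat_ceil_lt[of "\<epsilon>/4 / p x"] px e unfolding n_def
        by (intro mult_right_mono) auto
      also have "\<dots> = \<epsilon>/4 + p x" using px by (simp add: field_simps)
      finally show ?case using elim e by linarith
    qed
  qed
qed

end


context LS begin

lemma c3: "bdd_above_in_prob M (\<lambda>x \<omega>. tailL M (\<sigma> 0) (\<sigma> (first_exceed \<sigma> x \<omega>) \<omega>) / tailL M (\<sigma> 0) x - 1)"
  unfolding bdd_above_in_prob_def
proof (intro allI impI)
  fix \<epsilon> :: real assume e: "0 < \<epsilon>"
  obtain U1 where U1: "\<And>u. u \<ge> U1 \<Longrightarrow> p (u/2) < (1+1) * p u" using sv_half[of 1] by auto
  define K where "K = 4/\<epsilon>"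
  have K0: "0 \<le> K" "0 < K" using e by (auto simp: K_def)
  show "\<exists>K. \<forall>\<^sub>F x in at_top. prob {\<omega> \<in> space M. K < tailL M (\<sigma> 0) (\<sigma> (first_exceed \<sigma> x \<omega>) \<omega>) / tailL M (\<sigma> 0) x - 1} < \<epsilon>"
  proof (intro exI)
    show "\<forall>\<^sub>F x in at_top. prob {\<omega> \<in> space M. K < tailL M (\<sigma> 0) (\<sigma> (first_exceed \<sigma> x \<omega>) \<omega>) / tailL M (\<sigma> 0) x - 1} < \<epsilon>"
      using eventually_ge_at_top[of "max U1 1"]
    proof eventually_elim
      case (elim x)
      have x1: "1 \<le> x" "U1 \<le> x" using elim by auto
      have px: "0 < p x" by (rule p_pos)
      define c where "c = p x / (K+1)"
      have c0: "0 < c" using px K0 by (simp add: c_def)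
      have "p x < p x * (K + 1)" using mult_pos_pos[OF px K0(2)] by (simp add: algebra_simps)
      then have cx: "c < p x" unfolding c_def using K0 by (simp add: pos_divide_less_eq)
      obtain T where T: "\<And>t. t \<ge> T \<Longrightarrow> p t < c"
        using order_tendstoD(2)[OF p_lim c0] unfolding eventually_at_top_linorder by blast
      define S where "S = {t. p t < c}"
      have Sne: "S \<noteq> {}" using T[of "max T x"] by (auto simp: S_def)
      have Slow: "x < t" if "t \<in> S" for t
      proof (rule ccontr)
        assume "\<not> x < t"
        then have "p x \<le> p t" by (intro p_mono) simp
        then show False using that cx by (simp add: S_def)
      qed
      have bdd: "bdd_below S" using Slow by (meson bdd_belowI less_imp_le)
      define q where "q = Inf S"
      have xq: "x \<le> q" unfolding q_def using Sne Slow by (intro cInf_greatest) (auto intro: less_imp_le)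
      have q0: "0 < q" using xq x1 by linarith
      have "Inf S < 3/2 * q" using q0 by (simp add: q_def)
      then obtain t where t: "t \<in> S" "t < 3/2 * q" using cInf_lessD[OF Sne] by blast
      have tq: "q \<le> t" unfolding q_def using t(1) bdd by (rule cInf_lower)
      define s where "s = t/2"
      have sq: "s < q" using t q0 by (simp add: s_def)
      have "p s < (1+1) * p t" unfolding s_def using tq xq x1 by (intro U1) linarith
      then have ps: "p s < 2 * c" using t(1) by (simp add: S_def)
      define N where "N = {\<omega>\<in>space M. \<forall>i. \<sigma> i \<omega> \<le> x}"
      define E where "E = {\<omega>\<in>space M. \<exists>i. (\<forall>j<i. \<sigma> j \<omega> \<in> {..x}) \<and> \<sigma> i \<omega> \<in> {s<..}}"
      have sub: "{\<omega> \<in> space M. K < tailL M (\<sigma> 0) (\<sigma> (first_exceed \<sigma> x \<omega>) \<omega>) / tailL M (\<sigma> 0) x - 1} \<subseteq> N \<union> E"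
      proof (rule subsetI)
        fix \<omega> assume "\<omega> \<in> {\<omega> \<in> space M. K < tailL M (\<sigma> 0) (\<sigma> (first_exceed \<sigma> x \<omega>) \<omega>) / tailL M (\<sigma> 0) x - 1}"
        then have \<omega>: "\<omega> \<in> space M" "K + 1 < p x / p (\<sigma> (first_exceed \<sigma> x \<omega>) \<omega>)"
          by (auto simp: L_ratio)
        show "\<omega> \<in> N \<union> E"
        proof (cases "\<omega> \<in> N")
          case False
          define i where "i = first_exceed \<sigma> x \<omega>"
          have "p (\<sigma> i \<omega>) < c" unfolding c_def i_def by (rule aux3[OF px p_pos K0(1) \<omega>(2)])
          then have "\<sigma> i \<omega> \<in> S" by (simp add: S_def)
          then have "q \<le> \<sigma> i \<omega>" unfolding q_def using bdd by (rule cInf_lower)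
          then have "\<sigma> i \<omega> \<in> {s<..}" using sq by simp
          moreover have "\<forall>j<i. \<sigma> j \<omega> \<in> {..x}" using fe_lt by (simp add: i_def)
          ultimately show ?thesis using \<omega> by (auto simp: E_def)
        qed simp
      qed
      have NE: "N \<in> events" "E \<in> events" unfolding N_def E_def
        by (rule N_meas) (rule E_meas, auto)
      have "prob {\<omega> \<in> space M. K < tailL M (\<sigma> 0) (\<sigma> (first_exceed \<sigma> x \<omega>) \<omega>) / tailL M (\<sigma> 0) x - 1} \<le> prob (N \<union> E)"
        using NE by (intro finite_measure_mono[OF sub]) auto
      also have "\<dots> \<le> prob N + prob E" using NE by (rule measure_Un_le)
      also have "prob N = 0" unfolding N_def by (rule null)
      also have "prob E \<le> P0 {s<..} / (1 - P0 {..x})" unfolding E_def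
        by (rule unionb) (auto simp: P0_atMost px)
      also have "P0 {s<..} / (1 - P0 {..x}) = p s / p x" by (simp add: P0_atMost p_P0)
      also have "p s / p x < \<epsilon>" using ps unfolding c_def K_def by (rule ar3[OF px e])
      finally show ?case by simp
    qed
  qed
qed

lemma c4: "bdd_below_in_prob M (\<lambda>x \<omega>. tailL M (\<sigma> 0) (\<sigma> (first_exceed \<sigma> x \<omega>) \<omega>) / tailL M (\<sigma> 0) x - 1)"
  unfolding bdd_below_in_prob_def
proof (intro allI impI)
  fix \<epsilon> :: real assume e: "0 < \<epsilon>"
  define d where "d = \<epsilon>/4"
  have d0: "0 < d" using e by (simp add: d_def)
  obtain U2 where U2: "\<And>u. u \<ge> U2 \<Longrightarrow> p u / (1+d) < p (2*u)" using sv_double[OF d0] by auto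
  show "\<exists>\<delta>>0. \<forall>\<^sub>F x in at_top. prob {\<omega> \<in> space M. tailL M (\<sigma> 0) (\<sigma> (first_exceed \<sigma> x \<omega>) \<omega>) / tailL M (\<sigma> 0) x - 1 < \<delta>} < \<epsilon>"
  proof (intro exI conjI)
    show "0 < d" by (rule d0)
    show "\<forall>\<^sub>F x in at_top. prob {\<omega> \<in> space M. tailL M (\<sigma> 0) (\<sigma> (first_exceed \<sigma> x \<omega>) \<omega>) / tailL M (\<sigma> 0) x - 1 < d} < \<epsilon>"
      using eventually_ge_at_top[of "max (2*U2) 1"]
    proof eventually_elim
      case (elim x)
      have x1: "1 \<le> x" "2*U2 \<le> x" using elim by auto
      have px: "0 < p x" by (rule p_pos)
      define c where "c = p x / (1+d)"
      have c0: "0 < c" using px d0 by (simp add: c_def)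
      have "p x < p x * (1 + d)" using mult_pos_pos[OF px d0] by (simp add: algebra_simps)
      then have cx: "c < p x" unfolding c_def using d0 by (simp add: pos_divide_less_eq)
      obtain T where T: "\<And>t. t \<ge> T \<Longrightarrow> p t < c"
        using order_tendstoD(2)[OF p_lim c0] unfolding eventually_at_top_linorder by blast
      define D where "D = {t. c < p t}"
      have xD: "x \<in> D" using cx by (simp add: D_def)
      have Dne: "D \<noteq> {}" using xD by auto
      have Dup: "t < T" if "t \<in> D" for t
      proof (rule ccontr)
        assume "\<not> t < T"
        then have "p t < c" using T by simp
        then show False using that by (simp add: D_def)
      qed
      have bdd: "bdd_above D" using Dup by (meson bdd_aboveI less_imp_le)
      define r where "r = Sup D"
      have xr: "x \<le> r" unfolding r_def using xD bdd by (rule cSup_upper)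
      have r0: "0 < r" using xr x1 by linarith
      have "r/2 < Sup D" using r0 by (simp add: r_def)
      then obtain t where t: "t \<in> D" "r/2 < t" using less_cSupD[OF Dne] by blast
      have tU: "U2 \<le> t" using t(2) xr x1 by linarith
      have "c / (1+d) < p t / (1+d)" using t(1) d0 by (intro divide_strict_right_mono) (auto simp: D_def)
      also have "\<dots> < p (2*t)" using U2[OF tU] .
      finally have p2t: "p x / (1+d) / (1+d) < p (2*t)" by (simp add: c_def)
      have x2t: "x \<le> 2*t" using t(2) xr by linarith
      define N where "N = {\<omega>\<in>space M. \<forall>i. \<sigma> i \<omega> \<le> x}"
      define E where "E = {\<omega>\<in>space M. \<exists>i. (\<forall>j<i. \<sigma> j \<omega> \<in> {..x}) \<and> \<sigma> i \<omega> \<in> {x<..2*t}}"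
      have sub: "{\<omega> \<in> space M. tailL M (\<sigma> 0) (\<sigma> (first_exceed \<sigma> x \<omega>) \<omega>) / tailL M (\<sigma> 0) x - 1 < d} \<subseteq> N \<union> E"
      proof (rule subsetI)
        fix \<omega> assume "\<omega> \<in> {\<omega> \<in> space M. tailL M (\<sigma> 0) (\<sigma> (first_exceed \<sigma> x \<omega>) \<omega>) / tailL M (\<sigma> 0) x - 1 < d}"
        then have \<omega>: "\<omega> \<in> space M" "p x / p (\<sigma> (first_exceed \<sigma> x \<omega>) \<omega>) < 1 + d"
          by (auto simp: L_ratio)
        show "\<omega> \<in> N \<union> E"
        proof (cases "\<omega> \<in> N")
          case False
          then have "\<exists>i. x < \<sigma> i \<omega>" using \<omega> by (auto simp: N_def not_le)
          then have xs: "x < \<sigma> (first_exceed \<sigma> x \<omega>) \<omega>" by (rule fe_ex)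
          define i where "i = first_exceed \<sigma> x \<omega>"
          have "p x / (1 + d) < p (\<sigma> i \<omega>)" unfolding i_def
            by (rule aux2[OF px p_pos _ \<omega>(2)]) (use d0 in simp)
          then have "\<sigma> i \<omega> \<in> D" by (simp add: D_def c_def)
          then have "\<sigma> i \<omega> \<le> r" unfolding r_def using bdd by (rule cSup_upper)
          then have "\<sigma> i \<omega> \<in> {x<..2*t}" using xs t(2) by (simp add: i_def)
          moreover have "\<forall>j<i. \<sigma> j \<omega> \<in> {..x}" using fe_lt by (simp add: i_def)
          ultimately show ?thesis using \<omega> by (auto simp: E_def)
        qed simp
      qed
      have NE: "N \<in> events" "E \<in> events" unfolding N_def E_def
        by (rule N_meas) (rule E_meas, auto)
      have "prob {\<omega> \<in> space M. tailL M (\<sigma> 0) (\<sigma> (first_exceed \<sigma> x \<omega>) \<omega>) / tailL M (\<sigma> 0) x - 1 < d} \<le> prob (N \<union> E)"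
        using NE by (intro finite_measure_mono[OF sub]) auto
      also have "\<dots> \<le> prob N + prob E" using NE by (rule measure_Un_le)
      also have "prob N = 0" unfolding N_def by (rule null)
      also have "prob E \<le> P0 {x<..2*t} / (1 - P0 {..x})" unfolding E_def
        by (rule unionb) (auto simp: P0_atMost px)
      also have "P0 {x<..2*t} / (1 - P0 {..x}) = (p x - p (2*t)) / p x" by (simp add: P0_atMost P0_int x2t)
      also have "\<dots> < 4 * d" by (rule ar4[OF px d0 p2t])
      finally show ?case by (simp add: d_def)
    qed
  qed
qed

end


context LS begin

lemma X0_prob: "prob {\<omega>\<in>space M. x < \<sigma> 0 \<omega>} = p x" by (simp add: p_def)

lemma c5: "bdd_above_in_prob M (\<lambda>x \<omega>. tailL M (\<sigma> 0) (\<sigma> (prev_argmax \<sigma> x \<omega>) \<omega>) / tailL M (\<sigma> 0) x)"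
  unfolding bdd_above_in_prob_def
proof (intro allI impI)
  fix \<epsilon> :: real assume e: "0 < \<epsilon>"
  have ev: "eventually (\<lambda>x. p x < \<epsilon>) at_top" using p_lim e by (intro order_tendstoD(2)) auto
  show "\<exists>K. \<forall>\<^sub>F x in at_top. prob {\<omega> \<in> space M. K < tailL M (\<sigma> 0) (\<sigma> (prev_argmax \<sigma> x \<omega>) \<omega>) / tailL M (\<sigma> 0) x} < \<epsilon>"
  proof (intro exI)
    show "\<forall>\<^sub>F x in at_top. prob {\<omega> \<in> space M. 1 < tailL M (\<sigma> 0) (\<sigma> (prev_argmax \<sigma> x \<omega>) \<omega>) / tailL M (\<sigma> 0) x} < \<epsilon>"
      using ev
    proof eventually_elim
      case (elim x)
      have px: "0 < p x" by (rule p_pos)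
      define N where "N = {\<omega>\<in>space M. \<forall>i. \<sigma> i \<omega> \<le> x}"
      define X0 where "X0 = {\<omega>\<in>space M. x < \<sigma> 0 \<omega>}"
      have sub: "{\<omega> \<in> space M. 1 < tailL M (\<sigma> 0) (\<sigma> (prev_argmax \<sigma> x \<omega>) \<omega>) / tailL M (\<sigma> 0) x} \<subseteq> N \<union> X0"
      proof (rule subsetI)
        fix \<omega> assume "\<omega> \<in> {\<omega> \<in> space M. 1 < tailL M (\<sigma> 0) (\<sigma> (prev_argmax \<sigma> x \<omega>) \<omega>) / tailL M (\<sigma> 0) x}"
        then have \<omega>: "\<omega> \<in> space M" "1 < p x / p (\<sigma> (prev_argmax \<sigma> x \<omega>) \<omega>)"
          by (auto simp: L_ratio)
        show "\<omega> \<in> N \<union> X0"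
        proof (cases "\<omega> \<in> N")
          case False
          then have "\<exists>i. x < \<sigma> i \<omega>" using \<omega> by (auto simp: N_def not_le)
          then have xs: "x < \<sigma> (first_exceed \<sigma> x \<omega>) \<omega>" by (rule fe_ex)
          show ?thesis
          proof (cases "first_exceed \<sigma> x \<omega> = 0")
            case True
            then show ?thesis using xs \<omega> by (simp add: X0_def)
          next
            case False
            then have "prev_argmax \<sigma> x \<omega> < first_exceed \<sigma> x \<omega>" using pa by auto
            then have "\<sigma> (prev_argmax \<sigma> x \<omega>) \<omega> \<le> x" by (rule fe_lt)
            then have "p x \<le> p (\<sigma> (prev_argmax \<sigma> x \<omega>) \<omega>)" by (rule p_mono)
            then have "p x / p (\<sigma> (prev_argmax \<sigma> x \<omega>) \<omega>) \<le> 1" using p_pos by simp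
            then show ?thesis using \<omega> by simp
          qed
        qed simp
      qed
      have NE: "N \<in> events" "X0 \<in> events" unfolding N_def X0_def
        by (rule N_meas) measurable
      have "prob {\<omega> \<in> space M. 1 < tailL M (\<sigma> 0) (\<sigma> (prev_argmax \<sigma> x \<omega>) \<omega>) / tailL M (\<sigma> 0) x} \<le> prob (N \<union> X0)"
        using NE by (intro finite_measure_mono[OF sub]) auto
      also have "\<dots> \<le> prob N + prob X0" using NE by (rule measure_Un_le)
      also have "prob N = 0" unfolding N_def by (rule null)
      also have "prob X0 = p x" unfolding X0_def by (rule X0_prob)
      finally show ?case using elim by simp
    qed
  qed
qed

lemma c7: "bdd_above_in_prob M (\<lambda>x \<omega>. 1 - tailL M (\<sigma> 0) (\<sigma> (prev_argmax \<sigma> x \<omega>) \<omega>) / tailL M (\<sigma> 0) x)"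
  unfolding bdd_above_in_prob_def
proof (intro allI impI exI[where x=1] eventuallyI)
  fix \<epsilon> :: real and x assume e: "0 < \<epsilon>"
  have emp: "{\<omega> \<in> space M. 1 < 1 - tailL M (\<sigma> 0) (\<sigma> (prev_argmax \<sigma> x \<omega>) \<omega>) / tailL M (\<sigma> 0) x} = {}"
    by (auto simp: L_ratio not_less intro!: divide_nonneg_nonneg p_nonneg)
  then show "prob {\<omega> \<in> space M. 1 < 1 - tailL M (\<sigma> 0) (\<sigma> (prev_argmax \<sigma> x \<omega>) \<omega>) / tailL M (\<sigma> 0) x} < \<epsilon>"
    unfolding emp using e by simp
qed

end


context LS begin


lemma c6: "bdd_below_in_prob M (\<lambda>x \<omega>. tailL M (\<sigma> 0) (\<sigma> (prev_argmax \<sigma> x \<omega>) \<omega>) / tailL M (\<sigma> 0) x)"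
  unfolding bdd_below_in_prob_def
proof (intro allI impI)
  fix \<epsilon> :: real assume e: "0 < \<epsilon>"
  define d where "d = \<epsilon>/4"
  have d0: "0 < d" using e by (simp add: d_def)
  obtain U2 where U2: "\<And>u. u \<ge> U2 \<Longrightarrow> p u / (1+1) < p (2*u)" using sv_double[of 1] by auto
  define V where "V = max U2 1"
  have ev: "eventually (\<lambda>x. p x < d * p (2*V)) at_top"
    using p_lim d0 p_pos by (intro order_tendstoD(2)) auto
  show "\<exists>\<delta>>0. \<forall>\<^sub>F x in at_top. prob {\<omega> \<in> space M. tailL M (\<sigma> 0) (\<sigma> (prev_argmax \<sigma> x \<omega>) \<omega>) / tailL M (\<sigma> 0) x < \<delta>} < \<epsilon>"
  proof (intro exI conjI)
    show "0 < d" by (rule d0)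
    show "\<forall>\<^sub>F x in at_top. prob {\<omega> \<in> space M. tailL M (\<sigma> 0) (\<sigma> (prev_argmax \<sigma> x \<omega>) \<omega>) / tailL M (\<sigma> 0) x < d} < \<epsilon>"
      using ev
    proof eventually_elim
      case (elim x)
      have px: "0 < p x" by (rule p_pos)
      define c where "c = p x / d"
      have c0: "0 < c" using px d0 by (simp add: c_def)
      have cV: "c < p (2*V)" unfolding c_def using elim d0 by (simp add: pos_divide_less_eq mult.commute)
      obtain T where T: "\<And>t. t \<ge> T \<Longrightarrow> p t < c"
        using order_tendstoD(2)[OF p_lim c0] unfolding eventually_at_top_linorder by blast
      define D where "D = {t. c < p t}"
      have VD: "2*V \<in> D" using cV by (simp add: D_def)
      have Dne: "D \<noteq> {}" using VD by auto
      have Dup: "t < T" if "t \<in> D" for t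
      proof (rule ccontr)
        assume "\<not> t < T"
        then have "p t < c" using T by simp
        then show False using that by (simp add: D_def)
      qed
      have bdd: "bdd_above D" using Dup by (meson bdd_aboveI less_imp_le)
      define r where "r = Sup D"
      have Vr: "2*V \<le> r" unfolding r_def using VD bdd by (rule cSup_upper)
      have V1: "1 \<le> V" "U2 \<le> V" by (auto simp: V_def)
      have r0: "0 < r" using Vr V1 by linarith
      have "r/2 < Sup D" using r0 by (simp add: r_def)
      then obtain t where t: "t \<in> D" "r/2 < t" using less_cSupD[OF Dne] by blast
      have tU: "U2 \<le> t" using t(2) Vr V1 by linarith
      have "c / 2 < p t / 2" using t(1) by (simp add: D_def)
      also have "\<dots> < p (2*t)" using U2[OF tU] by simp
      also have "\<dots> \<le> p r" using t(2) by (intro p_mono) simp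
      finally have pr: "p x / d / 2 < p r" by (simp add: c_def)
      define N where "N = {\<omega>\<in>space M. \<forall>i. \<sigma> i \<omega> \<le> x}"
      define E where "E = {\<omega>\<in>space M. \<exists>i. (\<forall>j<i. \<sigma> j \<omega> \<in> {..r}) \<and> \<sigma> i \<omega> \<in> {x<..}}"
      have sub: "{\<omega> \<in> space M. tailL M (\<sigma> 0) (\<sigma> (prev_argmax \<sigma> x \<omega>) \<omega>) / tailL M (\<sigma> 0) x < d} \<subseteq> N \<union> E"
      proof (rule subsetI)
        fix \<omega> assume "\<omega> \<in> {\<omega> \<in> space M. tailL M (\<sigma> 0) (\<sigma> (prev_argmax \<sigma> x \<omega>) \<omega>) / tailL M (\<sigma> 0) x < d}"
        then have \<omega>: "\<omega> \<in> space M" "p x / p (\<sigma> (prev_argmax \<sigma> x \<omega>) \<omega>) < d"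
          by (auto simp: L_ratio)
        show "\<omega> \<in> N \<union> E"
        proof (cases "\<omega> \<in> N")
          case False
          then have "\<exists>i. x < \<sigma> i \<omega>" using \<omega> by (auto simp: N_def not_le)
          then have xs: "x < \<sigma> (first_exceed \<sigma> x \<omega>) \<omega>" by (rule fe_ex)
          have "\<forall>j<first_exceed \<sigma> x \<omega>. \<sigma> j \<omega> \<in> {..r}"
          proof (cases "first_exceed \<sigma> x \<omega> = 0")
            case False
            then have m: "\<forall>j<first_exceed \<sigma> x \<omega>. \<sigma> j \<omega> \<le> \<sigma> (prev_argmax \<sigma> x \<omega>) \<omega>" using pa by auto
            have "p x / d < p (\<sigma> (prev_argmax \<sigma> x \<omega>) \<omega>)"
              by (rule aux2[OF px p_pos d0 \<omega>(2)])
            then have "\<sigma> (prev_argmax \<sigma> x \<omega>) \<omega> \<in> D" by (simp add: D_def c_def)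
            then have "\<sigma> (prev_argmax \<sigma> x \<omega>) \<omega> \<le> r" unfolding r_def using bdd by (rule cSup_upper)
            then show ?thesis using m by force
          qed simp
          then show ?thesis using xs \<omega> by (auto simp: E_def)
        qed simp
      qed
      have NE: "N \<in> events" "E \<in> events" unfolding N_def E_def
        by (rule N_meas) (rule E_meas, auto)
      have "prob {\<omega> \<in> space M. tailL M (\<sigma> 0) (\<sigma> (prev_argmax \<sigma> x \<omega>) \<omega>) / tailL M (\<sigma> 0) x < d} \<le> prob (N \<union> E)"
        using NE by (intro finite_measure_mono[OF sub]) auto
      also have "\<dots> \<le> prob N + prob E" using NE by (rule measure_Un_le)
      also have "prob N = 0" unfolding N_def by (rule null)
      also have "prob E \<le> P0 {x<..} / (1 - P0 {..r})" unfolding E_def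
        by (rule unionb) (auto simp: P0_atMost p_pos)
      also have "P0 {x<..} / (1 - P0 {..r}) = p x / p r" by (simp add: P0_atMost p_P0)
      also have "\<dots> < 2 * d" by (rule ar6[OF px d0 pr])
      finally show ?case using e by (simp add: d_def)
    qed
  qed
qed

end


context LS begin


lemma c8: "bdd_below_in_prob M (\<lambda>x \<omega>. 1 - tailL M (\<sigma> 0) (\<sigma> (prev_argmax \<sigma> x \<omega>) \<omega>) / tailL M (\<sigma> 0) x)"
  unfolding bdd_below_in_prob_def
proof (intro allI impI)
  fix \<epsilon> :: real assume e: "0 < \<epsilon>"
  define d where "d = min (1/2) (\<epsilon>/4)"
  have d0: "0 < d" "d < 1" "d \<le> \<epsilon>/4" using e by (auto simp: d_def)
  obtain U1 where U1: "\<And>u. u \<ge> U1 \<Longrightarrow> p (u/2) < (1+d) * p u" using sv_half[OF d0(1)] by auto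
  define V where "V = max U1 1"
  have ev1: "eventually (\<lambda>x. p x < \<epsilon>/2) at_top" using p_lim e by (intro order_tendstoD(2)) auto
  have ev2: "eventually (\<lambda>x. p x < (1-d) * p (2*V)) at_top"
    using p_lim d0 p_pos by (intro order_tendstoD(2)) auto
  show "\<exists>\<delta>>0. \<forall>\<^sub>F x in at_top. prob {\<omega> \<in> space M. 1 - tailL M (\<sigma> 0) (\<sigma> (prev_argmax \<sigma> x \<omega>) \<omega>) / tailL M (\<sigma> 0) x < \<delta>} < \<epsilon>"
  proof (intro exI conjI)
    show "0 < d" by (rule d0)
    show "\<forall>\<^sub>F x in at_top. prob {\<omega> \<in> space M. 1 - tailL M (\<sigma> 0) (\<sigma> (prev_argmax \<sigma> x \<omega>) \<omega>) / tailL M (\<sigma> 0) x < d} < \<epsilon>"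
      using ev1 ev2
    proof eventually_elim
      case (elim x)
      have px: "0 < p x" by (rule p_pos)
      define c where "c = p x / (1-d)"
      have "p x * (1-d) < p x" using mult_pos_pos[OF px d0(1)] by (simp add: algebra_simps)
      then have cx: "p x < c" unfolding c_def using d0 by (simp add: pos_less_divide_eq)
      have cV: "c < p (2*V)" unfolding c_def using elim d0 by (simp add: pos_divide_less_eq mult.commute)
      define S where "S = {t. p t < c}"
      have xS: "x \<in> S" using cx by (simp add: S_def)
      have Sne: "S \<noteq> {}" using xS by auto
      have Slow: "2*V < t" if "t \<in> S" for t
      proof (rule ccontr)
        assume "\<not> 2*V < t"
        then have "p (2*V) \<le> p t" by (intro p_mono) simp
        then show False using that cV by (simp add: S_def)
      qed
      have bdd: "bdd_below S" using Slow by (meson bdd_belowI less_imp_le)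
      define q where "q = Inf S"
      have Vq: "2*V \<le> q" unfolding q_def using Sne Slow by (intro cInf_greatest) (auto intro: less_imp_le)
      have qx: "q \<le> x" unfolding q_def using xS bdd by (rule cInf_lower)
      have V1: "1 \<le> V" "U1 \<le> V" by (auto simp: V_def)
      have q0: "0 < q" using Vq V1 by linarith
      have "Inf S < 3/2 * q" using q0 by (simp add: q_def)
      then obtain t where t: "t \<in> S" "t < 3/2 * q" using cInf_lessD[OF Sne] by blast
      have tq: "q \<le> t" unfolding q_def using t(1) bdd by (rule cInf_lower)
      define s where "s = t/2"
      have sq: "s < q" using t q0 by (simp add: s_def)
      have sx: "s \<le> x" using sq qx by simp
      have "p s < (1+d) * p t" unfolding s_def using tq Vq V1 by (intro U1) linarith
      also have "\<dots> < (1+d) * c" using t(1) d0 by (intro mult_strict_left_mono) (auto simp: S_def)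
      finally have ps: "p s < (1+d) * (p x / (1-d))" by (simp add: c_def)
      define N where "N = {\<omega>\<in>space M. \<forall>i. \<sigma> i \<omega> \<le> x}"
      define X0 where "X0 = {\<omega>\<in>space M. x < \<sigma> 0 \<omega>}"
      define E where "E = {\<omega>\<in>space M. \<exists>i. (\<forall>j<i. \<sigma> j \<omega> \<in> {..s}) \<and> \<sigma> i \<omega> \<in> {s<..x}}"
      have sub: "{\<omega> \<in> space M. 1 - tailL M (\<sigma> 0) (\<sigma> (prev_argmax \<sigma> x \<omega>) \<omega>) / tailL M (\<sigma> 0) x < d} \<subseteq> N \<union> X0 \<union> E"
      proof (rule subsetI)
        fix \<omega> assume "\<omega> \<in> {\<omega> \<in> space M. 1 - tailL M (\<sigma> 0) (\<sigma> (prev_argmax \<sigma> x \<omega>) \<omega>) / tailL M (\<sigma> 0) x < d}"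
        then have \<omega>: "\<omega> \<in> space M" "1 - d < p x / p (\<sigma> (prev_argmax \<sigma> x \<omega>) \<omega>)"
          by (auto simp: L_ratio)
        show "\<omega> \<in> N \<union> X0 \<union> E"
        proof (cases "\<omega> \<in> N")
          case False
          then have "\<exists>i. x < \<sigma> i \<omega>" using \<omega> by (auto simp: N_def not_le)
          then have xs: "x < \<sigma> (first_exceed \<sigma> x \<omega>) \<omega>" by (rule fe_ex)
          show ?thesis
          proof (cases "first_exceed \<sigma> x \<omega> = 0")
            case True
            then show ?thesis using xs \<omega> by (simp add: X0_def)
          next
            case False
            define m where "m = prev_argmax \<sigma> x \<omega>"
            have mlt: "m < first_exceed \<sigma> x \<omega>" using pa False by (auto simp: m_def)
            have "p (\<sigma> m \<omega>) < c" unfolding c_def m_def by (rule aux4[OF px p_pos d0(2) \<omega>(2)])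
            then have "\<sigma> m \<omega> \<in> S" by (simp add: S_def)
            then have "q \<le> \<sigma> m \<omega>" unfolding q_def using bdd by (rule cInf_lower)
            then have sm: "s < \<sigma> m \<omega>" using sq by simp
            define k where "k = (LEAST k. s < \<sigma> k \<omega>)"
            have sk: "s < \<sigma> k \<omega>" unfolding k_def using sm by (rule LeastI)
            have km: "k \<le> m" unfolding k_def using sm by (rule Least_le)
            have kx: "\<sigma> k \<omega> \<le> x" using km mlt by (intro fe_lt) simp
            have "\<forall>j<k. \<sigma> j \<omega> \<in> {..s}"
              using not_less_Least[of _ "\<lambda>k. s < \<sigma> k \<omega>"] by (auto simp: k_def not_less)
            then have "\<omega> \<in> E" using sk kx \<omega> by (auto simp: E_def)
            then show ?thesis by simp
          qed
        qed simp
      qed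
      have NN: "N \<in> events" unfolding N_def by (rule N_meas)
      have XX: "X0 \<in> events" unfolding X0_def by measurable
      have EE: "E \<in> events" unfolding E_def by (rule E_meas) auto
      have h1: "prob {\<omega> \<in> space M. 1 - tailL M (\<sigma> 0) (\<sigma> (prev_argmax \<sigma> x \<omega>) \<omega>) / tailL M (\<sigma> 0) x < d} \<le> prob (N \<union> X0 \<union> E)"
        by (rule finite_measure_mono[OF sub]) (intro sets.Un NN XX EE)
      have h2: "prob (N \<union> X0 \<union> E) \<le> prob (N \<union> X0) + prob E"
        by (rule measure_Un_le) (intro sets.Un NN XX, rule EE)
      have h3: "prob (N \<union> X0) \<le> prob N + prob X0" by (rule measure_Un_le[OF NN XX])
      have h4: "prob N = 0" unfolding N_def by (rule null)
      have h5: "prob X0 = p x" unfolding X0_def by (rule X0_prob)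
      have h6: "prob E \<le> P0 {s<..x} / (1 - P0 {..s})" unfolding E_def
        by (rule unionb) (auto simp: P0_atMost p_pos)
      have h7: "P0 {s<..x} / (1 - P0 {..s}) = (p s - p x) / p s" by (simp add: P0_atMost P0_int sx)
      have h8: "(p s - p x) / p s < 2 * d" by (rule ar8[OF px p_pos d0(1) d0(2) ps])
      show ?case using h1 h2 h3 h4 h5 h6 h7 h8 d0 elim by linarith
    qed
  qed
qed

end

theorem lemma3p2:
  fixes M :: "'a measure" and \<sigma> :: "nat \<Rightarrow> 'a \<Rightarrow> real"
  assumes "prob_space M"
    and indep: "prob_space.indep_vars M (\<lambda>_. borel) \<sigma> UNIV"
    and ident: "\<And>i. distr M borel (\<sigma> i) = distr M borel (\<sigma> 0)"
    and pos: "AE \<omega> in M. 0 < \<sigma> 0 \<omega>"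
    and sv: "slowly_varying (tailL M (\<sigma> 0))"
  defines "L \<equiv> tailL M (\<sigma> 0)"
  shows "bdd_above_in_prob M (\<lambda>x \<omega>. real (first_exceed \<sigma> x \<omega>) / L x)
       \<and> bdd_below_in_prob M (\<lambda>x \<omega>. real (first_exceed \<sigma> x \<omega>) / L x)
       \<and> bdd_above_in_prob M (\<lambda>x \<omega>. L (\<sigma> (first_exceed \<sigma> x \<omega>) \<omega>) / L x - 1)
       \<and> bdd_below_in_prob M (\<lambda>x \<omega>. L (\<sigma> (first_exceed \<sigma> x \<omega>) \<omega>) / L x - 1)
       \<and> bdd_above_in_prob M (\<lambda>x \<omega>. L (\<sigma> (prev_argmax \<sigma> x \<omega>) \<omega>) / L x)
       \<and> bdd_below_in_prob M (\<lambda>x \<omega>. L (\<sigma> (prev_argmax \<sigma> x \<omega>) \<omega>) / L x)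
       \<and> bdd_above_in_prob M (\<lambda>x \<omega>. 1 - L (\<sigma> (prev_argmax \<sigma> x \<omega>) \<omega>) / L x)
       \<and> bdd_below_in_prob M (\<lambda>x \<omega>. 1 - L (\<sigma> (prev_argmax \<sigma> x \<omega>) \<omega>) / L x)"
proof -
  have "LS M \<sigma>" unfolding LS_def LS_axioms_def using assms(1) indep ident sv by auto
  then interpret LS M \<sigma> .
  show ?thesis unfolding L_def using c1 c2 c3 c4 c5 c6 c7 c8 by blast
qed

end
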